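(* Let $n\in\mathbb{N}$, $\mathcal{H}=(\mathbb{C}^2)^{\otimes n}$ with computational basis $\{\lvert\bm b\rangle:\bm b\in\{0,1\}^n\}$, let $c:\{0,1\}^n\to\mathbb{R}$ and $\mathcal{S}\subseteq\{0,1\}^n$, let $C\in\mathcal{L}(\mathcal{H})$ be defined by $C\lvert\bm b\rangle=c(\bm b)\lvert\bm b\rangle$, let $\mathcal{H}_{\mathcal{S}}=\operatorname{span}\{\lvert\bm b\rangle:\bm b\in\mathcal{S}\}$ with orthogonal projection $P_{\mathcal{S}}$. Let $\lvert\iota\rangle\in\mathcal{H}_{\mathcal{S}}$ be a unit vector and let $U_1,\dots,U_\ell\in\mathcal{L}(\mathcal{H})$ be unitaries with $U_\ell=\mathbb{1}$ such that $\{U_j\lvert\iota\rangle:j=1,\dots,\ell\}$ is linearly independent. For $\bm\alpha\in\mathbb{C}^\ell$ put $M_{\bm\alpha}=\sum_{j=1}^\ell\alpha_jU_j$, and consider the problem \[ \min_{\bm\alpha\in\mathbb{C}^\ell}\ \langle\iota\rvert M_{\bm\alpha}^\dagger C M_{\bm\alpha}\lvert\iota\rangle\quad\text{s.t.}\quad \langle\iota\rvert M_{\bm\alpha}^\dagger M_{\bm\alpha}\lvert\iota\rangle=1,\quad \langle\iota\rvert M_{\bm\alpha}^\dagger(\mathbb{1}-P_{\mathcal{S}}) M_{\bm\alpha}\lvert\iota\rangle=0. \tag{P} \] Define $\mathbf F,\mathbf G,\mathbf H\in\mathbb{C}^{\ell\times\ell}$ by $\mathbf F_{jk}=\langle\iota\rvert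 U_j^\dagger U_k\lvert\iota\rangle$, $\mathbf G_{jk}=\langle\iota\rvert U_j^\dagger(\mathbb{1}-P_{\mathcal{S}})U_k\lvert\iota\rangle$, $\mathbf H_{jk}=\langle\iota\rvert U_j^\dagger C U_k\lvert\iota\rangle$, and the real symmetric $2\ell\times2\ell$ matrices \[ \bm F=\begin{pmatrix}\operatorname{Re}\mathbf F&-\operatorname{Im}\mathbf F\\ \operatorname{Im}\mathbf F&\operatorname{Re}\mathbf F\end{pmatrix},\ \bm G=\begin{pmatrix}\operatorname{Re}\mathbf G&-\operatorname{Im}\mathbf G\\ \operatorname{Im}\mathbf G&\operatorname{Re}\mathbf G\end{pmatrix},\ \bm H=\begin{pmatrix}\operatorname{Re}\mathbf H&-\operatorname{Im}\mathbf H\\ \operatorname{Im}\mathbf H&\operatorname{Re}\mathbf H\end{pmatrix}. \] Let $m=\dim\ker\bm G$ and let $\bm B_{\bm G}$ be a real orthogonal $2\ell\times2\ell$ matrix such that $\bm B_{\bm G}\bm G\bm B_{\bm G}^{-1}$ is diagonal with its first $m$ diagonal entries equal to $0$ (and the others nonzero). Let $\tilde{\bm F}$ and $\tilde{\bm H}$ be the upper-left $m\times m$ blocks of $\bm B_{\bm G}\bm F\bm B_{\bm G}^{-1}$ and $\bm B_{\bm G}\bm H\bm B_{\bm G}^{-1}$, respectively. Let $\lambda_0$ be the smallest generalized eigenvalue of the generalized eigenvalue problem $\tilde{\bm H}\bm x=\lambda\tilde{\bm F}\bm x$, $\bm x\in\mathbb{R}^m\setminus\{\bm 0\}$, and let $\bm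 x_0$ be an associated generalized eigenvector normalized so that $\bm x_0^{\top}\tilde{\bm F}\bm x_0=1$. Then the minimum of (P) equals $\lambda_0$, and a minimizer of (P) is \[ \bm\alpha_0=\big[\bm B_{\bm G}^{-1}(\bm x_0,0,\dots,0)\big]_{1,\dots,\ell}+i\,\big[\bm B_{\bm G}^{-1}(\bm x_0,0,\dots,0)\big]_{\ell+1,\dots,2\ell}, \] where $(\bm x_0,0,\dots,0)\in\mathbb{R}^{2\ell}$ is $\bm x_0$ padded with $2\ell-m$ zeros and $[\bm v]_{a,\dots,b}$ denotes the vector of entries $a$ through $b$ of $\bm v$.
   Context: $\mathcal{L}(\mathcal{H})$ denotes linear operators on $\mathcal{H}$; $\mathbb{1}$ is the identity. The data $(n,c,\mathcal{S})$ is a constrained combinatorial optimization problem with objective $c$ and feasible set $\mathcal{S}$. A generalized eigenvalue of the pair $(\tilde{\bm H},\tilde{\bm F})$ is a $\lambda\in\mathbb{R}$ for which there is a nonzero $\bm x$ with $\tilde{\bm H}\bm x=\lambda\tilde{\bm F}\bm x$. *)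

theory Defs
  imports "Jordan_Normal_Form.Matrix_Kernel" "Jordan_Normal_Form.Conjugate"
begin

(* Hilbert space H = (C^2)^{\<otimes> n} = C^(2^n); computational basis vector |b> for
   b \<in> {0,1}^n is the standard unit vector with index the number whose binary digits are b. *)

definition adj :: "complex mat \<Rightarrow> complex mat" where
  "adj A = map_mat cnj (transpose_mat A)"

definition braket :: "complex vec \<Rightarrow> complex mat \<Rightarrow> complex vec \<Rightarrow> complex" where
  "braket v A w = (\<Sum>i<dim_vec v. cnj (v $ i) * (A *\<^sub>v w) $ i)"

definition unitary_mat :: "nat \<Rightarrow> complex mat \<Rightarrow> bool" where
  "unitary_mat N U \<longleftrightarrow> U \<in> carrier_mat N N \<and> adj U * U = 1\<^sub>m N \<and> U * adj U = 1\<^sub>m N"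

definition cost_op :: "nat \<Rightarrow> (nat \<Rightarrow> real) \<Rightarrow> complex mat" where
  "cost_op N c = mat N N (\<lambda>(i,j). if i = j then complex_of_real (c i) else 0)"

definition proj_op :: "nat \<Rightarrow> nat set \<Rightarrow> complex mat" where
  "proj_op N S = mat N N (\<lambda>(i,j). if i = j \<and> i \<in> S then 1 else 0)"

definition Mop :: "nat \<Rightarrow> nat \<Rightarrow> (nat \<Rightarrow> complex mat) \<Rightarrow> complex vec \<Rightarrow> complex mat" where
  "Mop N l U \<alpha> = mat N N (\<lambda>(r,s). \<Sum>j<l. \<alpha> $ j * U j $$ (r,s))"

definition lin_indep_family :: "nat \<Rightarrow> (nat \<Rightarrow> complex vec) \<Rightarrow> nat \<Rightarrow> bool" where
  "lin_indep_family N v l \<longleftrightarrow>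
     (\<forall>a :: nat \<Rightarrow> complex. (\<forall>i<N. (\<Sum>j<l. a j * v j $ i) = 0) \<longrightarrow> (\<forall>j<l. a j = 0))"

definition gram :: "nat \<Rightarrow> (nat \<Rightarrow> complex mat) \<Rightarrow> complex vec \<Rightarrow> complex mat \<Rightarrow> complex mat" where
  "gram l U \<iota> A = mat l l (\<lambda>(j,k). braket \<iota> (adj (U j) * A * U k) \<iota>)"

definition realify :: "complex mat \<Rightarrow> real mat" where
  "realify X = four_block_mat (map_mat Re X) (map_mat (\<lambda>z. - Im z) X) (map_mat Im X) (map_mat Re X)"

definition upper_left :: "nat \<Rightarrow> real mat \<Rightarrow> real mat" where
  "upper_left m A = mat m m (\<lambda>(i,j). A $$ (i,j))"

definition gen_eigenvalue :: "nat \<Rightarrow> real mat \<Rightarrow> real mat \<Rightarrow> real \<Rightarrow> bool" where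
  "gen_eigenvalue m Ht Ft lam \<longleftrightarrow>
     (\<exists>x \<in> carrier_vec m. x \<noteq> 0\<^sub>v m \<and> Ht *\<^sub>v x = lam \<cdot>\<^sub>v (Ft *\<^sub>v x))"

definition feasible :: "nat \<Rightarrow> nat \<Rightarrow> nat set \<Rightarrow> (nat \<Rightarrow> complex mat) \<Rightarrow> complex vec \<Rightarrow> complex vec \<Rightarrow> bool" where
  "feasible N l S U \<iota> \<alpha> \<longleftrightarrow> \<alpha> \<in> carrier_vec l \<and>
     braket \<iota> (adj (Mop N l U \<alpha>) * Mop N l U \<alpha>) \<iota> = 1 \<and>
     braket \<iota> (adj (Mop N l U \<alpha>) * (1\<^sub>m N - proj_op N S) * Mop N l U \<alpha>) \<iota> = 0"

definition objective :: "nat \<Rightarrow> nat \<Rightarrow> (nat \<Rightarrow> real) \<Rightarrow> (nat \<Rightarrow> complex mat) \<Rightarrow> complex vec \<Rightarrow> complex vec \<Rightarrow> complex" where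
  "objective N l c U \<iota> \<alpha> = braket \<iota> (adj (Mop N l U \<alpha>) * cost_op N c * Mop N l U \<alpha>) \<iota>"

end

theory Submission
  imports Defs "HOL-Analysis.Function_Topology" "HOL-Analysis.Abstract_Limits"
begin


definition qform :: "nat \<Rightarrow> (nat \<Rightarrow> nat \<Rightarrow> real) \<Rightarrow> (nat \<Rightarrow> real) \<Rightarrow> real" where
  "qform m h x = (\<Sum>i<m. \<Sum>j<m. x i * h i j * x j)"

lemma qform_cong: "(\<And>i. i < m \<Longrightarrow> x i = y i) \<Longrightarrow> qform m h x = qform m h y"
  unfolding qform_def by (intro sum.cong refl) auto

lemma qform_scale: "qform m h (\<lambda>i. x i / r) = qform m h x / r^2"
proof -
  have "\<And>i j. x i / r * h i j * (x j / r) = (x i * h i j * x j) / (r*r)"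
    by simp
  then show ?thesis unfolding qform_def by (simp add: sum_divide_distrib power2_eq_square)
qed

lemma qform_cont: "continuous_map (product_topology (\<lambda>_. euclideanreal) {..<m}) euclideanreal (qform m h)"
proof -
  have "continuous_map (product_topology (\<lambda>_. euclideanreal) {..<m}) euclideanreal
     (\<lambda>x. \<Sum>i<m. \<Sum>j<m. x i * h i j * x j)"
    by (intro continuous_map_sum continuous_map_real_mult continuous_map_real_mult_right
        continuous_map_product_projection[where X="\<lambda>_. euclideanreal", simplified]) auto
  then show ?thesis unfolding qform_def[abs_def] .
qed

lemma exists_min_rayleigh:
  fixes h f :: "nat \<Rightarrow> nat \<Rightarrow> real" and m :: nat
  assumes m: "m > 0" and fpos: "\<And>x. (\<exists>i<m. x i \<noteq> 0) \<Longrightarrow> qform m f x > 0"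
  shows "\<exists>xs. (\<exists>i<m. xs i \<noteq> 0) \<and> (\<forall>x. (\<exists>i<m. x i \<noteq> 0) \<longrightarrow> qform m h xs / qform m f xs \<le> qform m h x / qform m f x)"
proof -
  define X where "X = product_topology (\<lambda>_. euclideanreal) {..<m}"
  define K0 where "K0 = PiE {..<m} (\<lambda>_. {-1..1::real})"
  define g where "g = (\<lambda>x::nat\<Rightarrow>real. \<Sum>i<m. (x i)^2)"
  define K where "K = {x \<in> topspace (subtopology X K0). g x \<in> {1}}"
  define F where "F = (\<lambda>x. qform m h x / qform m f x)"
  have cK0: "compactin X K0" unfolding X_def K0_def by (simp add: compactin_PiE)
  have K0top: "K0 \<subseteq> topspace X" unfolding X_def K0_def by (auto simp: topspace_product_topology)
  have cK0': "compactin (subtopology X K0) K0" using cK0 by (simp add: compactin_subtopology)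
  have gcont: "continuous_map X euclideanreal g" unfolding X_def g_def
    by (intro continuous_map_sum continuous_map_real_pow
        continuous_map_product_projection[where X="\<lambda>_. euclideanreal", simplified]) auto
  have "closedin (subtopology X K0) K" unfolding K_def
    by (rule closedin_continuous_map_preimage) (auto intro: continuous_map_from_subtopology[OF gcont])
  moreover have KK0: "K \<subseteq> K0" unfolding K_def using K0top by auto
  ultimately have cK: "compactin (subtopology X K0) K" 
    using closed_compactin[OF cK0'] by blast
  have cKX: "compactin X K" using cK by (simp add: compactin_subtopology)
  have nz: "\<exists>i<m. x i \<noteq> 0" if "x \<in> K" for x
  proof (rule ccontr)
    assume "\<not> ?thesis"
    then have "g x = 0" unfolding g_def by simp
    with that show False unfolding K_def by auto
  qed
  have Fcont: "continuous_map (subtopology X K) euclideanreal F" unfolding F_def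
  proof (intro continuous_map_real_divide)
    show "continuous_map (subtopology X K) euclideanreal (qform m h)"
      using qform_cont continuous_map_from_subtopology X_def by blast
    show "continuous_map (subtopology X K) euclideanreal (qform m f)"
      using qform_cont continuous_map_from_subtopology X_def by blast
    fix x assume "x \<in> topspace (subtopology X K)"
    then have "x \<in> K" by auto
    then show "qform m f x \<noteq> 0" using fpos nz by force
  qed
  have "compactin euclideanreal (F ` K)"
    by (rule image_compactin[OF _ Fcont]) (use cKX in \<open>simp add: compactin_subtopology\<close>)
  then have cFK: "compact (F ` K)" by simp
  define e where "e = restrict (\<lambda>i. if i = 0 then 1 else 0::real) {..<m}"
  have "e \<in> K0" unfolding e_def K0_def by auto
  moreover have "g e = 1"
  proof -
    have "g e = (\<Sum>i<m. if i = 0 then 1 else 0)" unfolding g_def e_def by (intro sum.cong) auto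
    also have "\<dots> = 1" using m by (simp add: sum.delta)
    finally show ?thesis .
  qed
  ultimately have "e \<in> K" unfolding K_def using K0top by auto
  then have "F ` K \<noteq> {}" by auto
  from compact_attains_inf[OF cFK this] obtain xs where xs: "xs \<in> K" "\<And>y. y \<in> K \<Longrightarrow> F xs \<le> F y"
    by auto
  show ?thesis
  proof (rule exI[of _ xs], intro conjI allI impI)
    show "\<exists>i<m. xs i \<noteq> 0" using nz xs by auto
    fix x :: "nat \<Rightarrow> real" assume x: "\<exists>i<m. x i \<noteq> 0"
    define r where "r = sqrt (g x)"
    have gpos: "g x > 0"
    proof -
      obtain i where i: "i < m" "x i \<noteq> 0" using x by auto
      have "(x i)^2 \<le> g x" unfolding g_def
        by (rule member_le_sum[where f="\<lambda>i. (x i)^2"]) (use i in auto)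
      moreover have "(x i)^2 > 0" using i by simp
      ultimately show ?thesis by linarith
    qed
    then have r: "r > 0" unfolding r_def by simp
    define y where "y = restrict (\<lambda>i. x i / r) {..<m}"
    have r2: "r^2 = g x" unfolding r_def using gpos by simp
    have "y \<in> K0" unfolding y_def K0_def
    proof (auto)
      fix i assume i: "i < m"
      have "(x i)^2 \<le> g x" unfolding g_def
        by (rule member_le_sum[where f="\<lambda>i. (x i)^2"]) (use i in auto)
      then have "(x i)^2 \<le> r^2" using r2 by simp
      then have "\<bar>x i\<bar> \<le> r" using r power2_le_imp_le[of "\<bar>x i\<bar>" r] by simp
      then show "- 1 \<le> x i / r" "x i / r \<le> 1" using r by (auto simp: field_simps abs_le_iff)
    qed
    moreover have "g y = 1"
    proof -
      have "g y = (\<Sum>i<m. (x i)^2 / r^2)" unfolding g_def y_def by (simp add: power_divide)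
      also have "\<dots> = g x / r^2" unfolding g_def by (simp add: sum_divide_distrib)
      finally show ?thesis using r2 gpos by simp
    qed
    ultimately have "y \<in> K" unfolding K_def using K0top by auto
    then have "F xs \<le> F y" using xs by auto
    also have "F y = F x"
    proof -
      have "qform m h y = qform m h x / r^2" "qform m f y = qform m f x / r^2"
        using qform_cong[of m y "\<lambda>i. x i / r"] qform_scale unfolding y_def by auto
      then show ?thesis unfolding F_def using r by simp
    qed
    finally show "qform m h xs / qform m f xs \<le> qform m h x / qform m f x" unfolding F_def .
  qed
qed

lemma qform_zero: "(\<And>i. i < m \<Longrightarrow> x i = 0) \<Longrightarrow> qform m h x = 0"
  unfolding qform_def by simp

lemma quad_nonneg_lin0:
  fixes A b :: real
  assumes "\<And>t. 0 \<le> 2 * t * A + t^2 * b" and "A \<ge> 0"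
  shows "A = 0"
proof (rule ccontr)
  assume "A \<noteq> 0"
  with assms(2) have A: "A > 0" by simp
  define t where "t = - A / (\<bar>b\<bar> + 1)"
  have tneg: "t < 0" unfolding t_def using A by (simp add: divide_neg_pos)
  have "t * \<bar>b\<bar> \<ge> - A" unfolding t_def using A
    by (simp add: field_simps)
  then have "2 * A + t * \<bar>b\<bar> > 0" using A by linarith
  then have "t * (2 * A + t * \<bar>b\<bar>) < 0" using tneg by (simp add: mult_neg_pos)
  moreover have "t^2 * b \<le> t^2 * \<bar>b\<bar>" by (simp add: mult_left_mono)
  ultimately have "2 * t * A + t^2 * b < 0" by (simp add: power2_eq_square algebra_simps)
  with assms(1)[of t] show False by simp
qed

lemma rayleigh_eig:
  fixes h f :: "nat \<Rightarrow> nat \<Rightarrow> real" and m :: nat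
  assumes m: "m > 0" and fpos: "\<And>x. (\<exists>i<m. x i \<noteq> 0) \<Longrightarrow> qform m f x > 0"
    and hsym: "\<And>i j. i < m \<Longrightarrow> j < m \<Longrightarrow> h i j = h j i"
    and fsym: "\<And>i j. i < m \<Longrightarrow> j < m \<Longrightarrow> f i j = f j i"
  shows "\<exists>\<mu> xs. (\<exists>i<m. xs i \<noteq> 0) \<and> (\<forall>i<m. (\<Sum>j<m. h i j * xs j) = \<mu> * (\<Sum>j<m. f i j * xs j))
     \<and> (\<forall>x. \<mu> * qform m f x \<le> qform m h x)"
proof -
  obtain xs where xs: "\<exists>i<m. xs i \<noteq> 0"
    and xmin: "\<And>x. (\<exists>i<m. x i \<noteq> 0) \<Longrightarrow> qform m h xs / qform m f xs \<le> qform m h x / qform m f x"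
    using exists_min_rayleigh[OF m fpos, of h] by blast
  define \<mu> where "\<mu> = qform m h xs / qform m f xs"
  have fxs: "qform m f xs > 0" using fpos xs by blast
  have ineq: "\<mu> * qform m f x \<le> qform m h x" for x
  proof (cases "\<exists>i<m. x i \<noteq> 0")
    case True
    then have "qform m f x > 0" using fpos by blast
    with xmin[OF True] show ?thesis unfolding \<mu>_def by (simp add: pos_le_divide_eq)
  next
    case False
    then show ?thesis using qform_zero[of m x] by auto
  qed
  define k where "k = (\<lambda>i j. h i j - \<mu> * f i j)"
  have qk: "qform m k x = qform m h x - \<mu> * qform m f x" for x
    unfolding qform_def k_def
    by (simp add: algebra_simps sum_subtractf sum_distrib_left)
  have ksym: "\<And>i j. i < m \<Longrightarrow> j < m \<Longrightarrow> k i j = k j i" unfolding k_def using hsym fsym by simp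
  have qk0: "qform m k xs = 0" unfolding qk \<mu>_def using fxs by simp
  define u where "u = (\<lambda>i. \<Sum>j<m. k i j * xs j)"
  define A where "A = (\<Sum>i<m. u i * u i)"
  have exp: "qform m k (\<lambda>i. xs i + t * u i) = 2 * t * A + t^2 * qform m k u" for t
  proof -
    have e1: "(xs i + t * u i) * k i j * (xs j + t * u j) =
       xs i * k i j * xs j + t * (u i * k i j * xs j) + t * (xs i * k i j * u j) + t^2 * (u i * k i j * u j)" for i j
      by (simp add: algebra_simps power2_eq_square)
    have s1: "(\<Sum>i<m. \<Sum>j<m. u i * k i j * xs j) = A"
      unfolding A_def u_def by (simp add: sum_distrib_left mult.assoc)
    have "(\<Sum>i<m. \<Sum>j<m. xs i * k i j * u j) = (\<Sum>j<m. \<Sum>i<m. xs i * k i j * u j)"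
      by (rule sum.swap)
    also have "\<dots> = (\<Sum>j<m. \<Sum>i<m. u j * k j i * xs i)"
      using ksym by (intro sum.cong refl) (simp add: mult.commute)
    finally have s2: "(\<Sum>i<m. \<Sum>j<m. xs i * k i j * u j) = A" using s1 by simp
    have "qform m k (\<lambda>i. xs i + t * u i) = qform m k xs + t * (\<Sum>i<m. \<Sum>j<m. u i * k i j * xs j)
       + t * (\<Sum>i<m. \<Sum>j<m. xs i * k i j * u j) + t^2 * qform m k u"
      unfolding qform_def e1 by (simp add: sum.distrib sum_distrib_left)
    then show ?thesis using s1 s2 qk0 by simp
  qed
  have "\<And>t. 0 \<le> 2 * t * A + t^2 * qform m k u"
    using ineq qk by (metis exp diff_ge_0_iff_ge)
  moreover have "A \<ge> 0" unfolding A_def by (simp add: sum_nonneg)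
  ultimately have "A = 0" by (rule quad_nonneg_lin0)
  then have u0: "\<forall>i<m. u i * u i = 0" unfolding A_def
    by (subst (asm) sum_nonneg_eq_0_iff) auto
  show ?thesis
  proof (rule exI[of _ \<mu>], rule exI[of _ xs], intro conjI allI impI)
    show "\<exists>i<m. xs i \<noteq> 0" by fact
    show "\<mu> * qform m f x \<le> qform m h x" for x by (rule ineq)
    fix i assume i: "i < m"
    then have "u i = 0" using u0 by simp
    then show "(\<Sum>j<m. h i j * xs j) = \<mu> * (\<Sum>j<m. f i j * xs j)"
      unfolding u_def k_def by (simp add: algebra_simps sum_subtractf sum_distrib_left)
  qed
qed



definition dmat :: "nat \<Rightarrow> (nat \<Rightarrow> real) \<Rightarrow> complex mat" where
  "dmat N d = mat N N (\<lambda>(i,j). if i = j then complex_of_real (d i) else 0)"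

lemma dmat_carrier[simp]: "dmat N d \<in> carrier_mat N N" unfolding dmat_def by simp

lemma dmat_mult_vec: assumes z: "z \<in> carrier_vec N"
  shows "dmat N d *\<^sub>v z = vec N (\<lambda>p. complex_of_real (d p) * z $ p)"
proof (rule eq_vecI)
  fix p assume "p < dim_vec (vec N (\<lambda>p. complex_of_real (d p) * z $ p))"
  then have p: "p < N" by simp
  have "(dmat N d *\<^sub>v z) $ p = (\<Sum>q\<in>{0..<N}. (if p = q then complex_of_real (d p) else 0) * z $ q)"
    using p z unfolding dmat_def by (simp add: scalar_prod_def row_def)
  also have "\<dots> = (\<Sum>q\<in>{0..<N}. if p = q then complex_of_real (d p) * z $ q else 0)"
    by (intro sum.cong) auto
  also have "\<dots> = complex_of_real (d p) * z $ p" using p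
    by (simp add: sum.delta')
  finally show "(dmat N d *\<^sub>v z) $ p = vec N (\<lambda>p. complex_of_real (d p) * z $ p) $ p" using p by simp
qed (simp add: dmat_def)

lemma adj_carrier[simp]: "P \<in> carrier_mat N N \<Longrightarrow> adj P \<in> carrier_mat N N"
  unfolding adj_def by simp

lemma braket_diag:
  assumes P: "P \<in> carrier_mat N N" and Q: "Q \<in> carrier_mat N N" and v: "v \<in> carrier_vec N"
  shows "braket v (adj P * dmat N d * Q) v =
    (\<Sum>p<N. complex_of_real (d p) * cnj ((P *\<^sub>v v) $ p) * (Q *\<^sub>v v) $ p)"
proof -
  define y where "y = dmat N d *\<^sub>v (Q *\<^sub>v v)"
  have ycar: "y \<in> carrier_vec N" unfolding y_def
    by (intro mult_mat_vec_carrier[OF dmat_carrier] mult_mat_vec_carrier[OF Q v])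
  have y: "y $ p = complex_of_real (d p) * (Q *\<^sub>v v) $ p" if "p < N" for p
    unfolding y_def using dmat_mult_vec[of "Q *\<^sub>v v" N d] Q v that by simp
  have c1: "adj P * dmat N d \<in> carrier_mat N N" by (rule mult_carrier_mat[OF adj_carrier[OF P] dmat_carrier])
  have "(adj P * dmat N d * Q) *\<^sub>v v = (adj P * dmat N d) *\<^sub>v (Q *\<^sub>v v)"
    by (rule assoc_mult_mat_vec[OF c1 Q v])
  also have "\<dots> = adj P *\<^sub>v y" unfolding y_def
    by (rule assoc_mult_mat_vec[OF adj_carrier[OF P] dmat_carrier mult_mat_vec_carrier[OF Q v]])
  finally have "(adj P * dmat N d * Q) *\<^sub>v v = adj P *\<^sub>v y" .
  moreover have "(adj P *\<^sub>v y) $ i = (\<Sum>p<N. cnj (P $$ (p, i)) * y $ p)" if "i < N" for i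
    using that P ycar unfolding adj_def
    by (simp add: scalar_prod_def row_def atLeast0LessThan)
  ultimately have "braket v (adj P * dmat N d * Q) v = (\<Sum>i<N. cnj (v $ i) * (\<Sum>p<N. cnj (P $$ (p, i)) * y $ p))"
    unfolding braket_def using v by simp
  also have "\<dots> = (\<Sum>i<N. \<Sum>p<N. y $ p * (cnj (P $$ (p, i)) * cnj (v $ i)))"
    by (simp add: sum_distrib_left mult_ac)
  also have "\<dots> = (\<Sum>p<N. \<Sum>i<N. y $ p * (cnj (P $$ (p, i)) * cnj (v $ i)))"
    by (rule sum.swap)
  also have "\<dots> = (\<Sum>p<N. y $ p * cnj (\<Sum>i<N. P $$ (p, i) * v $ i))"
    by (simp add: sum_distrib_left)
  also have "\<dots> = (\<Sum>p<N. y $ p * cnj ((P *\<^sub>v v) $ p))"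
    using P v by (intro sum.cong refl) (simp add: scalar_prod_def row_def atLeast0LessThan)
  also have "\<dots> = (\<Sum>p<N. complex_of_real (d p) * cnj ((P *\<^sub>v v) $ p) * (Q *\<^sub>v v) $ p)"
    using y by (intro sum.cong refl) simp
  finally show ?thesis .
qed

lemma Mop_carrier[simp]: "Mop N l U \<alpha> \<in> carrier_mat N N" unfolding Mop_def by simp

lemma Mop_vec:
  assumes U: "\<And>j. j < l \<Longrightarrow> U j \<in> carrier_mat N N" and v: "v \<in> carrier_vec N" and p: "p < N"
  shows "(Mop N l U \<alpha> *\<^sub>v v) $ p = (\<Sum>j<l. \<alpha> $ j * (U j *\<^sub>v v) $ p)"
proof -
  have "(Mop N l U \<alpha> *\<^sub>v v) $ p = (\<Sum>r<N. (\<Sum>j<l. \<alpha> $ j * U j $$ (p, r)) * v $ r)"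
    using p v unfolding Mop_def by (simp add: scalar_prod_def row_def atLeast0LessThan)
  also have "\<dots> = (\<Sum>r<N. \<Sum>j<l. \<alpha> $ j * (U j $$ (p, r) * v $ r))"
    by (intro sum.cong refl) (simp add: sum_distrib_right mult.assoc)
  also have "\<dots> = (\<Sum>j<l. \<Sum>r<N. \<alpha> $ j * (U j $$ (p, r) * v $ r))"
    by (rule sum.swap)
  also have "\<dots> = (\<Sum>j<l. \<alpha> $ j * (\<Sum>r<N. U j $$ (p, r) * v $ r))"
    by (simp add: sum_distrib_left)
  also have "\<dots> = (\<Sum>j<l. \<alpha> $ j * (U j *\<^sub>v v) $ p)"
  proof (intro sum.cong refl)
    fix j assume "j \<in> {..<l}"
    then have Uj: "U j \<in> carrier_mat N N" using U by simp
    then show "\<alpha> $ j * (\<Sum>r<N. U j $$ (p, r) * v $ r) = \<alpha> $ j * (U j *\<^sub>v v) $ p"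
      using p v by (simp add: scalar_prod_def row_def atLeast0LessThan)
  qed
  finally show ?thesis .
qed



lemma split2: fixes l :: nat shows "(\<Sum>i<2*l. f i) = (\<Sum>i<l. f i) + (\<Sum>i<l. f (i + l))"
proof -
  have "(\<Sum>i<2*l. f i) = sum f {0..<2*l}" by (simp add: atLeast0LessThan)
  also have "\<dots> = sum f {0..<l} + sum f {l..<2*l}"
    by (rule sum.atLeastLessThan_concat[symmetric]) auto
  also have "sum f {l..<2*l} = sum f {0+l..<l+l}" by (simp add: mult_2)
  also have "\<dots> = (\<Sum>i\<in>{0..<l}. f (i + l))" by (rule sum.shift_bounds_nat_ivl)
  finally show ?thesis by (simp add: atLeast0LessThan)
qed

lemma split2x2: fixes l :: nat shows "(\<Sum>i<2*l. \<Sum>k<2*l. g i k) =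
  (\<Sum>i<l. \<Sum>k<l. g i k + g i (k+l) + g (i+l) k + g (i+l) (k+l))"
  by (simp add: split2 sum.distrib add_ac)

lemma realify_carrier[simp]: "X \<in> carrier_mat l l \<Longrightarrow> realify X \<in> carrier_mat (2*l) (2*l)"
  unfolding realify_def by (simp add: mult_2)

definition alpha_of :: "nat \<Rightarrow> real vec \<Rightarrow> complex vec" where
  "alpha_of l y = vec l (\<lambda>j. complex_of_real (y $ j) + \<i> * complex_of_real (y $ (j + l)))"

lemma realify_quad:
  assumes X: "X \<in> carrier_mat l l" and y: "y \<in> carrier_vec (2*l)"
  shows "y \<bullet> (realify X *\<^sub>v y) =
    (\<Sum>j<l. \<Sum>k<l. Re (cnj (alpha_of l y $ j) * alpha_of l y $ k * X $$ (j,k)))"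
proof -
  define R where "R = realify X"
  have R: "R \<in> carrier_mat (2*l) (2*l)" unfolding R_def using X by simp
  have "y \<bullet> (R *\<^sub>v y) = (\<Sum>i<2*l. y $ i * (\<Sum>k<2*l. R $$ (i,k) * y $ k))"
    using R y by (simp add: scalar_prod_def row_def atLeast0LessThan)
  also have "\<dots> = (\<Sum>i<2*l. \<Sum>k<2*l. y $ i * R $$ (i,k) * y $ k)"
    by (simp add: sum_distrib_left mult.assoc)
  also have "\<dots> = (\<Sum>i<l. \<Sum>k<l. y $ i * R $$ (i,k) * y $ k + y $ i * R $$ (i,k+l) * y $ (k+l)
      + y $ (i+l) * R $$ (i+l,k) * y $ k + y $ (i+l) * R $$ (i+l,k+l) * y $ (k+l))"
    by (rule split2x2)
  also have "\<dots> = (\<Sum>j<l. \<Sum>k<l. Re (cnj (alpha_of l y $ j) * alpha_of l y $ k * X $$ (j,k)))"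
  proof (intro sum.cong refl)
    fix i k assume i: "i \<in> {..<l}" and k: "k \<in> {..<l}"
    have e: "R $$ (i,k) = Re (X $$ (i,k))" "R $$ (i,k+l) = - Im (X $$ (i,k))"
      "R $$ (i+l,k) = Im (X $$ (i,k))" "R $$ (i+l,k+l) = Re (X $$ (i,k))"
      using i k X unfolding R_def realify_def by auto
    show "y $ i * R $$ (i,k) * y $ k + y $ i * R $$ (i,k+l) * y $ (k+l)
      + y $ (i+l) * R $$ (i+l,k) * y $ k + y $ (i+l) * R $$ (i+l,k+l) * y $ (k+l) =
      Re (cnj (alpha_of l y $ i) * alpha_of l y $ k * X $$ (i,k))"
      unfolding e alpha_of_def using i k by (simp add: algebra_simps)
  qed
  finally show ?thesis unfolding R_def .
qed

definition val :: "nat \<Rightarrow> nat \<Rightarrow> (nat \<Rightarrow> complex vec) \<Rightarrow> (nat \<Rightarrow> real) \<Rightarrow> complex vec \<Rightarrow> real" where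
  "val N l w d \<alpha> = (\<Sum>p<N. d p * (cmod (\<Sum>j<l. \<alpha> $ j * w j $ p))^2)"

lemma braket_Mop:
  assumes U: "\<And>j. j < l \<Longrightarrow> U j \<in> carrier_mat N N" and v: "v \<in> carrier_vec N"
  shows "braket v (adj (Mop N l U \<alpha>) * dmat N d * Mop N l U \<alpha>) v
     = complex_of_real (val N l (\<lambda>j. U j *\<^sub>v v) d \<alpha>)"
proof -
  have "braket v (adj (Mop N l U \<alpha>) * dmat N d * Mop N l U \<alpha>) v
     = (\<Sum>p<N. complex_of_real (d p) * cnj ((Mop N l U \<alpha> *\<^sub>v v) $ p) * (Mop N l U \<alpha> *\<^sub>v v) $ p)"
    by (rule braket_diag[OF Mop_carrier Mop_carrier v])
  also have "\<dots> = (\<Sum>p<N. complex_of_real (d p * (cmod (\<Sum>j<l. \<alpha> $ j * (U j *\<^sub>v v) $ p))^2))"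
  proof (intro sum.cong refl)
    fix p assume "p \<in> {..<N}"
    then have p: "p < N" by simp
    show "complex_of_real (d p) * cnj ((Mop N l U \<alpha> *\<^sub>v v) $ p) * (Mop N l U \<alpha> *\<^sub>v v) $ p =
      complex_of_real (d p * (cmod (\<Sum>j<l. \<alpha> $ j * (U j *\<^sub>v v) $ p))^2)"
    proof -
      define s where "s = (\<Sum>j<l. \<alpha> $ j * (U j *\<^sub>v v) $ p)"
      have z: "(Mop N l U \<alpha> *\<^sub>v v) $ p = s" unfolding s_def by (rule Mop_vec[OF U v p])
      have e1: "complex_of_real (d p * (cmod s)^2) = complex_of_real (d p) * (s * cnj s)"
        by (simp only: of_real_mult complex_norm_square)
      have e2: "complex_of_real (d p) * cnj s * s = complex_of_real (d p) * (s * cnj s)"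
        by (simp only: ac_simps)
      show ?thesis unfolding z s_def[symmetric] by (simp only: e1 e2)
    qed
  qed
  finally show ?thesis unfolding val_def by simp
qed

lemma gram_entry:
  assumes U: "\<And>j. j < l \<Longrightarrow> U j \<in> carrier_mat N N" and v: "v \<in> carrier_vec N"
    and j: "j < l" and k: "k < l"
  shows "gram l U v (dmat N d) $$ (j,k) =
    (\<Sum>p<N. complex_of_real (d p) * cnj ((U j *\<^sub>v v) $ p) * (U k *\<^sub>v v) $ p)"
  unfolding gram_def using j k braket_diag[OF U[OF j] U[OF k] v] by simp

lemma gram_carrier[simp]: "gram l U v A \<in> carrier_mat l l" unfolding gram_def by simp

lemma val_gram:
  assumes U: "\<And>j. j < l \<Longrightarrow> U j \<in> carrier_mat N N" and v: "v \<in> carrier_vec N"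
  shows "val N l (\<lambda>j. U j *\<^sub>v v) d \<alpha> =
    (\<Sum>j<l. \<Sum>k<l. Re (cnj (\<alpha> $ j) * \<alpha> $ k * gram l U v (dmat N d) $$ (j,k)))"
proof -
  define w where "w = (\<lambda>j. U j *\<^sub>v v)"
  have "complex_of_real (val N l w d \<alpha>) =
     (\<Sum>p<N. complex_of_real (d p) * (cnj (\<Sum>j<l. \<alpha> $ j * w j $ p) * (\<Sum>k<l. \<alpha> $ k * w k $ p)))"
    unfolding val_def of_real_sum of_real_mult complex_norm_square by (simp add: mult_ac)
  also have "\<dots> = (\<Sum>p<N. \<Sum>k<l. \<Sum>j<l. complex_of_real (d p) * (cnj (\<alpha> $ j) * cnj (w j $ p) * (\<alpha> $ k * w k $ p)))"
    by (simp add: sum_distrib_left sum_distrib_right)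
  also have "\<dots> = (\<Sum>p<N. \<Sum>j<l. \<Sum>k<l. complex_of_real (d p) * (cnj (\<alpha> $ j) * cnj (w j $ p) * (\<alpha> $ k * w k $ p)))"
    by (rule sum.cong[OF refl], rule sum.swap)
  also have "\<dots> = (\<Sum>j<l. \<Sum>p<N. \<Sum>k<l. complex_of_real (d p) * (cnj (\<alpha> $ j) * cnj (w j $ p) * (\<alpha> $ k * w k $ p)))"
    by (rule sum.swap)
  also have "\<dots> = (\<Sum>j<l. \<Sum>k<l. \<Sum>p<N. complex_of_real (d p) * (cnj (\<alpha> $ j) * cnj (w j $ p) * (\<alpha> $ k * w k $ p)))"
    by (intro sum.cong refl sum.swap)
  also have "\<dots> = (\<Sum>j<l. \<Sum>k<l. cnj (\<alpha> $ j) * \<alpha> $ k * gram l U v (dmat N d) $$ (j,k))"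
  proof (intro sum.cong refl)
    fix j k assume "j \<in> {..<l}" "k \<in> {..<l}"
    then have jk: "j < l" "k < l" by auto
    show "(\<Sum>p<N. complex_of_real (d p) * (cnj (\<alpha> $ j) * cnj (w j $ p) * (\<alpha> $ k * w k $ p))) =
      cnj (\<alpha> $ j) * \<alpha> $ k * gram l U v (dmat N d) $$ (j,k)"
      using gram_entry[OF U v jk, where d=d] unfolding w_def by (simp add: sum_distrib_left mult_ac)
  qed
  finally have "complex_of_real (val N l w d \<alpha>) = (\<Sum>j<l. \<Sum>k<l. cnj (\<alpha> $ j) * \<alpha> $ k * gram l U v (dmat N d) $$ (j,k))" .
  then have "Re (complex_of_real (val N l w d \<alpha>)) = Re (\<Sum>j<l. \<Sum>k<l. cnj (\<alpha> $ j) * \<alpha> $ k * gram l U v (dmat N d) $$ (j,k))"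
    by simp
  then show ?thesis unfolding w_def by simp
qed

lemma quad_val:
  assumes U: "\<And>j. j < l \<Longrightarrow> U j \<in> carrier_mat N N" and v: "v \<in> carrier_vec N"
    and y: "y \<in> carrier_vec (2*l)"
  shows "y \<bullet> (realify (gram l U v (dmat N d)) *\<^sub>v y) = val N l (\<lambda>j. U j *\<^sub>v v) d (alpha_of l y)"
  by (simp add: val_gram[OF U v] realify_quad[OF gram_carrier y])



lemma vq: assumes A: "A \<in> carrier_mat n n" and x: "x \<in> carrier_vec n"
  shows "x \<bullet> (A *\<^sub>v x) = qform n (\<lambda>i j. A $$ (i,j)) (\<lambda>i. x $ i)"
proof -
  have "x \<bullet> (A *\<^sub>v x) = (\<Sum>i<n. x $ i * (\<Sum>j<n. A $$ (i,j) * x $ j))"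
    using A x by (simp add: scalar_prod_def row_def atLeast0LessThan)
  then show ?thesis unfolding qform_def by (simp add: sum_distrib_left mult.assoc)
qed

lemma qform_hcong: "(\<And>i j. i < m \<Longrightarrow> j < m \<Longrightarrow> h i j = h' i j) \<Longrightarrow> qform m h x = qform m h' x"
  unfolding qform_def by (intro sum.cong refl) auto

lemma qform_extend:
  assumes mn: "m \<le> n" and z: "\<And>i. m \<le> i \<Longrightarrow> i < n \<Longrightarrow> x i = 0"
  shows "qform n h x = qform m h x"
proof -
  have sub: "{..<m} \<subseteq> {..<n}" using mn by auto
  have "qform n h x = (\<Sum>i<n. \<Sum>j<m. x i * h i j * x j)"
    unfolding qform_def
  proof (rule sum.cong[OF refl])
    fix i assume "i \<in> {..<n}"
    show "(\<Sum>j<n. x i * h i j * x j) = (\<Sum>j<m. x i * h i j * x j)"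
      by (rule sum.mono_neutral_right[OF finite_lessThan sub]) (use z in auto)
  qed
  also have "\<dots> = (\<Sum>i<m. \<Sum>j<m. x i * h i j * x j)"
    by (rule sum.mono_neutral_right[OF finite_lessThan sub]) (use z in auto)
  finally show ?thesis unfolding qform_def .
qed

lemma qform_diag:
  assumes "\<And>i j. i < n \<Longrightarrow> j < n \<Longrightarrow> i \<noteq> j \<Longrightarrow> h i j = 0"
  shows "qform n h x = (\<Sum>i<n. h i i * (x i)^2)"
  unfolding qform_def
proof (intro sum.cong refl)
  fix i assume i: "i \<in> {..<n}"
  have "(\<Sum>j<n. x i * h i j * x j) = (\<Sum>j\<in>{i}. x i * h i j * x j)"
    by (rule sum.mono_neutral_right) (use i assms in auto)
  then show "(\<Sum>j<n. x i * h i j * x j) = h i i * (x i)^2" by (simp add: power2_eq_square)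
qed

lemma BT:
  fixes B X :: "real mat"
  assumes B: "B \<in> carrier_mat n n" and X: "X \<in> carrier_mat n n" and z: "z \<in> carrier_vec n"
  shows "z \<bullet> ((B * X * transpose_mat B) *\<^sub>v z) = (transpose_mat B *\<^sub>v z) \<bullet> (X *\<^sub>v (transpose_mat B *\<^sub>v z))"
proof -
  have Bt: "transpose_mat B \<in> carrier_mat n n" using B by simp
  have BX: "B * X \<in> carrier_mat n n" using B X by simp
  have "(B * X * transpose_mat B) *\<^sub>v z = (B * X) *\<^sub>v (transpose_mat B *\<^sub>v z)"
    by (rule assoc_mult_mat_vec[OF BX Bt z])
  also have "\<dots> = B *\<^sub>v (X *\<^sub>v (transpose_mat B *\<^sub>v z))"
    by (rule assoc_mult_mat_vec[OF B X]) (use Bt z in simp)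
  finally have e: "(B * X * transpose_mat B) *\<^sub>v z = B *\<^sub>v (X *\<^sub>v (transpose_mat B *\<^sub>v z))" .
  show ?thesis unfolding e
    by (rule transpose_vec_mult_scalar[OF B _ z, symmetric]) (use X Bt z in simp)
qed

definition padv :: "nat \<Rightarrow> nat \<Rightarrow> real vec \<Rightarrow> real vec" where
  "padv n m x = vec n (\<lambda>i. if i < m then x $ i else 0)"

lemma padv_carrier[simp]: "padv n m x \<in> carrier_vec n" unfolding padv_def by simp

lemma pad_quad:
  assumes Q: "Q \<in> carrier_mat n n" and x: "x \<in> carrier_vec m" and mn: "m \<le> n"
  shows "padv n m x \<bullet> (Q *\<^sub>v padv n m x) = x \<bullet> (upper_left m Q *\<^sub>v x)"
proof -
  have UQ: "upper_left m Q \<in> carrier_mat m m" unfolding upper_left_def by simp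
  have "padv n m x \<bullet> (Q *\<^sub>v padv n m x) = qform n (\<lambda>i j. Q $$ (i,j)) (\<lambda>i. padv n m x $ i)"
    by (rule vq[OF Q padv_carrier])
  also have "\<dots> = qform m (\<lambda>i j. Q $$ (i,j)) (\<lambda>i. padv n m x $ i)"
    by (rule qform_extend[OF mn]) (simp add: padv_def)
  also have "\<dots> = qform m (\<lambda>i j. upper_left m Q $$ (i,j)) (\<lambda>i. x $ i)"
    using mn by (intro trans[OF qform_hcong qform_cong]) (auto simp: upper_left_def padv_def)
  also have "\<dots> = x \<bullet> (upper_left m Q *\<^sub>v x)" by (rule vq[OF UQ x, symmetric])
  finally show ?thesis .
qed

lemma alpha_of_carrier[simp]: "alpha_of l y \<in> carrier_vec l" unfolding alpha_of_def by simp

definition realvec :: "nat \<Rightarrow> complex vec \<Rightarrow> real vec" where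
  "realvec l a = vec (2*l) (\<lambda>i. if i < l then Re (a $ i) else Im (a $ (i - l)))"

lemma realvec_carrier[simp]: "realvec l a \<in> carrier_vec (2*l)" unfolding realvec_def by simp

lemma alpha_of_realvec: "a \<in> carrier_vec l \<Longrightarrow> alpha_of l (realvec l a) = a"
  unfolding alpha_of_def realvec_def by (intro eq_vecI) (auto simp: complex_eq_iff)

lemma val_nonneg: "(\<And>p. p < N \<Longrightarrow> d p \<ge> 0) \<Longrightarrow> val N l w d a \<ge> 0"
  unfolding val_def by (intro sum_nonneg) auto



lemma gram_herm:
  assumes U: "\<And>j. j < l \<Longrightarrow> U j \<in> carrier_mat N N" and v: "v \<in> carrier_vec N"
    and j: "j < l" and k: "k < l"
  shows "gram l U v (dmat N d) $$ (k,j) = cnj (gram l U v (dmat N d) $$ (j,k))"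
  using gram_entry[OF U v j k, where d=d] gram_entry[OF U v k j, where d=d] by (simp add: mult_ac)

lemma realify_sym:
  assumes X: "X \<in> carrier_mat l l" and h: "\<And>j k. j < l \<Longrightarrow> k < l \<Longrightarrow> X $$ (k,j) = cnj (X $$ (j,k))"
  shows "transpose_mat (realify X) = realify X"
proof (rule eq_matI)
  show "dim_row (transpose_mat (realify X)) = dim_row (realify X)"
       "dim_col (transpose_mat (realify X)) = dim_col (realify X)"
    using X by (auto simp: realify_def)
  fix i k assume i: "i < dim_row (realify X)" and k: "k < dim_col (realify X)"
  then have i2: "i < 2*l" and k2: "k < 2*l" using X by (auto simp: realify_def)
  show "transpose_mat (realify X) $$ (i, k) = realify X $$ (i, k)"
  proof (cases "i < l"; cases "k < l")
    assume "i < l" "k < l" then show ?thesis using X h[of i k] by (simp add: realify_def)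
  next
    assume a: "i < l" "\<not> k < l" then show ?thesis using X h[of i "k-l"] k2 by (simp add: realify_def)
  next
    assume a: "\<not> i < l" "k < l" then show ?thesis using X h[of "i-l" k] i2 by (simp add: realify_def)
  next
    assume a: "\<not> i < l" "\<not> k < l" then show ?thesis using X h[of "i-l" "k-l"] i2 k2 by (simp add: realify_def)
  qed
qed

lemma congr_sym:
  fixes B R :: "real mat"
  assumes B: "B \<in> carrier_mat n n" and R: "R \<in> carrier_mat n n" and s: "transpose_mat R = R"
    and i: "i < n" and j: "j < n"
  shows "(B * R * transpose_mat B) $$ (j,i) = (B * R * transpose_mat B) $$ (i,j)"
proof -
  have BR: "B * R \<in> carrier_mat n n" using B R by simp
  have "transpose_mat (B * R * transpose_mat B) = transpose_mat (transpose_mat B) * transpose_mat (B * R)"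
    by (rule transpose_mult[OF BR]) (use B in simp)
  also have "\<dots> = B * (transpose_mat R * transpose_mat B)"
    using transpose_mult[OF B R] by simp
  also have "\<dots> = B * R * transpose_mat B" unfolding s
    by (rule assoc_mult_mat[symmetric, of B n n R n "transpose_mat B" n]) (use B R in auto)
  finally have e: "transpose_mat (B * R * transpose_mat B) = B * R * transpose_mat B" .
  have "(B * R * transpose_mat B) $$ (j,i) = transpose_mat (B * R * transpose_mat B) $$ (i,j)"
    using B R i j by simp
  then show ?thesis unfolding e .
qed

lemma upper_left_idx: "i < m \<Longrightarrow> j < m \<Longrightarrow> upper_left m A $$ (i,j) = A $$ (i,j)"
  unfolding upper_left_def by simp

lemma upper_left_carrier[simp]: "upper_left m A \<in> carrier_mat m m"
  unfolding upper_left_def by simp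



theorem theorem1:
  fixes n l m :: nat
    and c :: "nat \<Rightarrow> real" and S :: "nat set"
    and iota :: "complex vec" and U :: "nat \<Rightarrow> complex mat"
    and B :: "real mat" and lam0 :: real and x0 :: "real vec"
  defines "N \<equiv> 2 ^ n"
  defines "Fc \<equiv> gram l U iota (1\<^sub>m N)"
    and "Gc \<equiv> gram l U iota (1\<^sub>m N - proj_op N S)"
    and "Hc \<equiv> gram l U iota (cost_op N c)"
  defines "Fr \<equiv> realify Fc" and "Gr \<equiv> realify Gc" and "Hr \<equiv> realify Hc"
  defines "Ft \<equiv> upper_left m (B * Fr * transpose_mat B)"
    and "Ht \<equiv> upper_left m (B * Hr * transpose_mat B)"
  defines "v0 \<equiv> transpose_mat B *\<^sub>v vec (2 * l) (\<lambda>i. if i < m then x0 $ i else 0)"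
  defines "alpha0 \<equiv> vec l (\<lambda>j. complex_of_real (v0 $ j) + \<i> * complex_of_real (v0 $ (j + l)))"
  assumes S_sub: "S \<subseteq> {..<N}"
    and iota_car: "iota \<in> carrier_vec N"
    and iota_in_HS: "\<forall>i<N. i \<notin> S \<longrightarrow> iota $ i = 0"
    and iota_unit: "(\<Sum>i<N. (cmod (iota $ i))\<^sup>2) = 1"
    and l_pos: "l \<ge> 1"
    and U_unitary: "\<forall>j<l. unitary_mat N (U j)"
    and U_last: "U (l - 1) = 1\<^sub>m N"
    and U_indep: "lin_indep_family N (\<lambda>j. U j *\<^sub>v iota) l"
    and m_def: "m = kernel_dim Gr"
    and B_car: "B \<in> carrier_mat (2 * l) (2 * l)"
    and B_orth: "transpose_mat B * B = 1\<^sub>m (2 * l)" "B * transpose_mat B = 1\<^sub>m (2 * l)"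
    and B_diag: "diagonal_mat (B * Gr * transpose_mat B)"
    and B_zero: "\<forall>i<m. (B * Gr * transpose_mat B) $$ (i, i) = 0"
    and B_nonzero: "\<forall>i. m \<le> i \<and> i < 2 * l \<longrightarrow> (B * Gr * transpose_mat B) $$ (i, i) \<noteq> 0"
    and lam0_eig: "gen_eigenvalue m Ht Ft lam0"
    and lam0_min: "\<forall>mu. gen_eigenvalue m Ht Ft mu \<longrightarrow> lam0 \<le> mu"
    and x0_car: "x0 \<in> carrier_vec m" and x0_nz: "x0 \<noteq> 0\<^sub>v m"
    and x0_eig: "Ht *\<^sub>v x0 = lam0 \<cdot>\<^sub>v (Ft *\<^sub>v x0)"
    and x0_norm: "x0 \<bullet> (Ft *\<^sub>v x0) = 1"
  shows "feasible N l S U iota alpha0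
     \<and> objective N l c U iota alpha0 = complex_of_real lam0
     \<and> (\<forall>alpha. feasible N l S U iota alpha \<longrightarrow> objective N l c U iota alpha \<in> \<real> \<and> lam0 \<le> Re (objective N l c U iota alpha))"
proof -
  have Ucar: "\<And>j. j < l \<Longrightarrow> U j \<in> carrier_mat N N"
    using U_unitary unfolding unitary_mat_def by auto
  define w where "w = (\<lambda>j. U j *\<^sub>v iota)"
  define one where "one = (\<lambda>_::nat. 1::real)"
  define gS where "gS = (\<lambda>i::nat. if i \<in> S then 0 else 1::real)"
  have d1: "1\<^sub>m N = dmat N one" unfolding one_def dmat_def by (intro eq_matI) auto
  have dG: "1\<^sub>m N - proj_op N S = dmat N gS"
    unfolding gS_def dmat_def proj_op_def by (intro eq_matI) auto
  have dC: "cost_op N c = dmat N c" unfolding cost_op_def dmat_def ..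
  have FrE: "Fr = realify (gram l U iota (dmat N one))" unfolding Fr_def Fc_def d1 ..
  have GrE: "Gr = realify (gram l U iota (dmat N gS))" unfolding Gr_def Gc_def dG ..
  have HrE: "Hr = realify (gram l U iota (dmat N c))" unfolding Hr_def Hc_def dC ..
  have lF: "\<And>y. y \<in> carrier_vec (2*l) \<Longrightarrow> y \<bullet> (Fr *\<^sub>v y) = val N l w one (alpha_of l y)"
    unfolding FrE w_def by (rule quad_val[OF Ucar iota_car])
  have lG: "\<And>y. y \<in> carrier_vec (2*l) \<Longrightarrow> y \<bullet> (Gr *\<^sub>v y) = val N l w gS (alpha_of l y)"
    unfolding GrE w_def by (rule quad_val[OF Ucar iota_car])
  have lH: "\<And>y. y \<in> carrier_vec (2*l) \<Longrightarrow> y \<bullet> (Hr *\<^sub>v y) = val N l w c (alpha_of l y)"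
    unfolding HrE w_def by (rule quad_val[OF Ucar iota_car])
  have bF: "braket iota (adj (Mop N l U a) * Mop N l U a) iota = complex_of_real (val N l w one a)" for a
  proof -
    have "adj (Mop N l U a) * Mop N l U a = adj (Mop N l U a) * dmat N one * Mop N l U a"
      unfolding d1[symmetric] by (simp add: right_mult_one_mat[OF adj_carrier[OF Mop_carrier]])
    then show ?thesis using braket_Mop[OF Ucar iota_car] unfolding w_def by simp
  qed
  have bG: "braket iota (adj (Mop N l U a) * (1\<^sub>m N - proj_op N S) * Mop N l U a) iota
      = complex_of_real (val N l w gS a)" for a
    unfolding dG w_def by (rule braket_Mop[OF Ucar iota_car])
  have bH: "objective N l c U iota a = complex_of_real (val N l w c a)" for a
    unfolding objective_def dC w_def by (rule braket_Mop[OF Ucar iota_car])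
  have Frc: "Fr \<in> carrier_mat (2*l) (2*l)" unfolding FrE by simp
  have Grc: "Gr \<in> carrier_mat (2*l) (2*l)" unfolding GrE by simp
  have Hrc: "Hr \<in> carrier_mat (2*l) (2*l)" unfolding HrE by simp
  have mle: "m \<le> 2*l" unfolding m_def using Grc kernel_dim_code[of Gr] by simp
  have BTq: "\<And>X z. X \<in> carrier_mat (2*l) (2*l) \<Longrightarrow> z \<in> carrier_vec (2*l) \<Longrightarrow>
     z \<bullet> ((B * X * transpose_mat B) *\<^sub>v z) = (transpose_mat B *\<^sub>v z) \<bullet> (X *\<^sub>v (transpose_mat B *\<^sub>v z))"
    by (rule BT[OF B_car])
  have Btc: "transpose_mat B \<in> carrier_mat (2*l) (2*l)" using B_car by simp
  have BBt: "B *\<^sub>v (transpose_mat B *\<^sub>v z) = z" if "z \<in> carrier_vec (2*l)" for z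
    using assoc_mult_mat_vec[OF B_car Btc that, symmetric] B_orth(2) that by simp
  have BtB: "transpose_mat B *\<^sub>v (B *\<^sub>v z) = z" if "z \<in> carrier_vec (2*l)" for z
    using assoc_mult_mat_vec[OF Btc B_car that, symmetric] B_orth(1) that by simp
  define D where "D = B * Gr * transpose_mat B"
  have Dc: "D \<in> carrier_mat (2*l) (2*l)" unfolding D_def using B_car Grc by simp
  have Doff: "\<And>i j. i < 2*l \<Longrightarrow> j < 2*l \<Longrightarrow> i \<noteq> j \<Longrightarrow> D $$ (i,j) = 0"
    using B_diag Dc unfolding D_def[symmetric] diagonal_mat_def by auto
  have Dquad: "z \<bullet> (D *\<^sub>v z) = (\<Sum>i<2*l. D $$ (i,i) * (z $ i)^2)" if "z \<in> carrier_vec (2*l)" for z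
    using vq[OF Dc that] qform_diag[of "2*l" "\<lambda>i j. D $$ (i,j)", OF Doff] by simp
  have Dnn: "D $$ (i,i) \<ge> 0" if i: "i < 2*l" for i
  proof -
    define e where "e = (unit_vec (2*l) i :: real vec)"
    have ec: "e \<in> carrier_vec (2*l)" unfolding e_def by simp
    have "e \<bullet> (D *\<^sub>v e) = (\<Sum>k<2*l. D $$ (k,k) * (e $ k)^2)" by (rule Dquad[OF ec])
    also have "\<dots> = (\<Sum>k<2*l. if k = i then D $$ (i,i) else 0)"
      unfolding e_def using i by (intro sum.cong refl) (auto simp: unit_vec_def)
    also have "\<dots> = D $$ (i,i)" using i by simp
    finally have "D $$ (i,i) = e \<bullet> (D *\<^sub>v e)" by simp
    also have "\<dots> = (transpose_mat B *\<^sub>v e) \<bullet> (Gr *\<^sub>v (transpose_mat B *\<^sub>v e))"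
      unfolding D_def by (rule BTq[OF Grc ec])
    also have "\<dots> = val N l w gS (alpha_of l (transpose_mat B *\<^sub>v e))"
      by (rule lG) (use Btc ec in simp)
    also have "\<dots> \<ge> 0" by (rule val_nonneg) (simp add: gS_def)
    finally show ?thesis .
  qed
  define px0 where "px0 = padv (2*l) m x0"
  have v0: "v0 = transpose_mat B *\<^sub>v px0" unfolding v0_def px0_def padv_def ..
  have a0: "alpha0 = alpha_of l v0" unfolding alpha0_def alpha_of_def ..
  have v0c: "v0 \<in> carrier_vec (2*l)" unfolding v0 px0_def using Btc by simp
  have px0c: "px0 \<in> carrier_vec (2*l)" unfolding px0_def by simp
  have q1: "val N l w one alpha0 = 1"
  proof -
    have "val N l w one alpha0 = v0 \<bullet> (Fr *\<^sub>v v0)" unfolding a0 by (rule lF[OF v0c, symmetric])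
    also have "\<dots> = px0 \<bullet> ((B * Fr * transpose_mat B) *\<^sub>v px0)" unfolding v0 by (rule BTq[OF Frc px0c, symmetric])
    also have "\<dots> = x0 \<bullet> (Ft *\<^sub>v x0)" unfolding px0_def Ft_def
      by (rule pad_quad[OF _ x0_car mle]) (use B_car Frc in simp)
    finally show ?thesis using x0_norm by simp
  qed
  have q2: "val N l w gS alpha0 = 0"
  proof -
    have "val N l w gS alpha0 = v0 \<bullet> (Gr *\<^sub>v v0)" unfolding a0 by (rule lG[OF v0c, symmetric])
    also have "\<dots> = px0 \<bullet> (D *\<^sub>v px0)" unfolding v0 D_def by (rule BTq[OF Grc px0c, symmetric])
    also have "\<dots> = (\<Sum>i<2*l. D $$ (i,i) * (px0 $ i)^2)" by (rule Dquad[OF px0c])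
    also have "\<dots> = 0"
    proof (rule sum.neutral, rule ballI)
      fix i assume "i \<in> {..<2*l}"
      then have i: "i < 2*l" by simp
      show "D $$ (i,i) * (px0 $ i)^2 = 0"
      proof (cases "i < m")
        case True then show ?thesis using B_zero unfolding D_def by simp
      next
        case False then show ?thesis using i unfolding px0_def padv_def by simp
      qed
    qed
    finally show ?thesis .
  qed
  have q3: "val N l w c alpha0 = lam0"
  proof -
    have "val N l w c alpha0 = v0 \<bullet> (Hr *\<^sub>v v0)" unfolding a0 by (rule lH[OF v0c, symmetric])
    also have "\<dots> = px0 \<bullet> ((B * Hr * transpose_mat B) *\<^sub>v px0)" unfolding v0 by (rule BTq[OF Hrc px0c, symmetric])
    also have "\<dots> = x0 \<bullet> (Ht *\<^sub>v x0)" unfolding px0_def Ht_def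
      by (rule pad_quad[OF _ x0_car mle]) (use B_car Hrc in simp)
    also have "\<dots> = lam0 * (x0 \<bullet> (Ft *\<^sub>v x0))" unfolding x0_eig
      by (rule scalar_prod_smult_right) (use x0_car in \<open>simp add: Ft_def upper_left_def\<close>)
    finally show ?thesis using x0_norm by simp
  qed
  have feas0: "feasible N l S U iota alpha0"
    unfolding feasible_def using bF[of alpha0] bG[of alpha0] q1 q2 a0 by simp
  have obj0: "objective N l c U iota alpha0 = complex_of_real lam0"
    using bH[of alpha0] q3 by simp
  have mpos: "m > 0"
  proof (rule ccontr)
    assume "\<not> m > 0"
    then have "m = 0" by simp
    then have "x0 = 0\<^sub>v m" using x0_car by (intro eq_vecI) auto
    with x0_nz show False by simp
  qed
  define ft where "ft = (\<lambda>i j. Ft $$ (i,j))"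
  define ht where "ht = (\<lambda>i j. Ht $$ (i,j))"
  have Ftc: "Ft \<in> carrier_mat m m" unfolding Ft_def by simp
  have Htc: "Ht \<in> carrier_mat m m" unfolding Ht_def by simp
  have Fsym: "transpose_mat Fr = Fr" unfolding FrE
    by (rule realify_sym[OF gram_carrier gram_herm[OF Ucar iota_car]])
  have Hsym: "transpose_mat Hr = Hr" unfolding HrE
    by (rule realify_sym[OF gram_carrier gram_herm[OF Ucar iota_car]])
  have symF: "\<And>i j. i < m \<Longrightarrow> j < m \<Longrightarrow> ft i j = ft j i"
    unfolding ft_def Ft_def using mle by (simp add: upper_left_idx congr_sym[OF B_car Frc Fsym])
  have symH: "\<And>i j. i < m \<Longrightarrow> j < m \<Longrightarrow> ht i j = ht j i"
    unfolding ht_def Ht_def using mle by (simp add: upper_left_idx congr_sym[OF B_car Hrc Hsym])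
  have Fquad: "qform m ft (\<lambda>i. xv $ i) = val N l w one (alpha_of l (transpose_mat B *\<^sub>v padv (2*l) m xv))"
    if xv: "xv \<in> carrier_vec m" for xv
  proof -
    have "qform m ft (\<lambda>i. xv $ i) = xv \<bullet> (Ft *\<^sub>v xv)" unfolding ft_def by (rule vq[OF Ftc xv, symmetric])
    also have "\<dots> = padv (2*l) m xv \<bullet> ((B * Fr * transpose_mat B) *\<^sub>v padv (2*l) m xv)"
      unfolding Ft_def by (rule pad_quad[OF _ xv mle, symmetric]) (use B_car Frc in simp)
    also have "\<dots> = val N l w one (alpha_of l (transpose_mat B *\<^sub>v padv (2*l) m xv))"
      using BTq[OF Frc padv_carrier] lF[of "transpose_mat B *\<^sub>v padv (2*l) m xv"] Btc by simp
    finally show ?thesis .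
  qed
  have Hquad: "qform m ht (\<lambda>i. xv $ i) = val N l w c (alpha_of l (transpose_mat B *\<^sub>v padv (2*l) m xv))"
    if xv: "xv \<in> carrier_vec m" for xv
  proof -
    have "qform m ht (\<lambda>i. xv $ i) = xv \<bullet> (Ht *\<^sub>v xv)" unfolding ht_def by (rule vq[OF Htc xv, symmetric])
    also have "\<dots> = padv (2*l) m xv \<bullet> ((B * Hr * transpose_mat B) *\<^sub>v padv (2*l) m xv)"
      unfolding Ht_def by (rule pad_quad[OF _ xv mle, symmetric]) (use B_car Hrc in simp)
    also have "\<dots> = val N l w c (alpha_of l (transpose_mat B *\<^sub>v padv (2*l) m xv))"
      using BTq[OF Hrc padv_carrier] lH[of "transpose_mat B *\<^sub>v padv (2*l) m xv"] Btc by simp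
    finally show ?thesis .
  qed
  have pdF: "qform m ft x > 0" if x: "\<exists>i<m. x i \<noteq> 0" for x
  proof -
    define xv where "xv = vec m x"
    have xvc: "xv \<in> carrier_vec m" unfolding xv_def by simp
    define y where "y = transpose_mat B *\<^sub>v padv (2*l) m xv"
    have yc: "y \<in> carrier_vec (2*l)" unfolding y_def using Btc by simp
    define a where "a = alpha_of l y"
    have "qform m ft x = qform m ft (\<lambda>i. xv $ i)" unfolding xv_def by (rule qform_cong) simp
    also have "\<dots> = val N l w one a" unfolding a_def y_def by (rule Fquad[OF xvc])
    finally have qe: "qform m ft x = val N l w one a" .
    have "val N l w one a \<ge> 0" by (rule val_nonneg) (simp add: one_def)
    moreover have "val N l w one a \<noteq> 0"
    proof
      assume "val N l w one a = 0"
      then have "\<forall>p\<in>{..<N}. (cmod (\<Sum>j<l. a $ j * w j $ p))^2 = 0"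
        unfolding val_def one_def by (subst (asm) sum_nonneg_eq_0_iff) auto
      then have "\<forall>p<N. (\<Sum>j<l. a $ j * w j $ p) = 0" by simp
      then have "\<forall>i<N. (\<Sum>j<l. (\<lambda>j. a $ j) j * (\<lambda>j. U j *\<^sub>v iota) j $ i) = 0"
        unfolding w_def by simp
      then have a0': "\<forall>j<l. a $ j = 0"
        using U_indep unfolding lin_indep_family_def by blast
      have "y = 0\<^sub>v (2*l)"
      proof (rule eq_vecI)
        fix i assume "i < dim_vec (0\<^sub>v (2*l) :: real vec)"
        then have i: "i < 2*l" by simp
        show "y $ i = 0\<^sub>v (2*l) $ i"
        proof (cases "i < l")
          case True
          then have "a $ i = 0" using a0' by simp
          then have "Re (a $ i) = 0" by simp
          then show ?thesis using True i unfolding a_def alpha_of_def by simp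
        next
          case False
          then have il: "i - l < l" "i - l + l = i" using i by auto
          then have "a $ (i - l) = 0" using a0' by simp
          then have "Im (a $ (i - l)) = 0" by simp
          then show ?thesis using il i unfolding a_def alpha_of_def by simp
        qed
      qed (use yc in simp)
      note y0 = this
      have B0: "B *\<^sub>v 0\<^sub>v (2*l) = 0\<^sub>v (2*l)"
        using B_car by (intro eq_vecI) (auto simp: scalar_prod_def)
      have "padv (2*l) m xv = B *\<^sub>v y" unfolding y_def by (rule BBt[symmetric]) simp
      also have "\<dots> = 0\<^sub>v (2*l)" unfolding y0 by (rule B0)
      finally have "padv (2*l) m xv = 0\<^sub>v (2*l)" .
      moreover obtain i where i: "i < m" "x i \<noteq> 0" using x by auto
      moreover have "padv (2*l) m xv $ i = x i" using i mle by (simp add: padv_def xv_def)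
      ultimately show False using i mle by simp
    qed
    ultimately show ?thesis using qe by simp
  qed
  obtain \<mu> xs where xs: "\<exists>i<m. xs i \<noteq> 0"
    and eig: "\<forall>i<m. (\<Sum>j<m. ht i j * xs j) = \<mu> * (\<Sum>j<m. ft i j * xs j)"
    and ineq: "\<forall>x. \<mu> * qform m ft x \<le> qform m ht x"
    using rayleigh_eig[of m ft ht, OF mpos pdF symH symF] by blast
  have "gen_eigenvalue m Ht Ft \<mu>"
    unfolding gen_eigenvalue_def
  proof (intro bexI[of _ "vec m xs"] conjI)
    show "vec m xs \<in> carrier_vec m" by simp
    show "vec m xs \<noteq> 0\<^sub>v m"
    proof
      assume "vec m xs = 0\<^sub>v m"
      then have "\<And>i. i < m \<Longrightarrow> xs i = 0"
      proof -
        fix i assume i: "i < m"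
        have "vec m xs $ i = 0\<^sub>v m $ i" using \<open>vec m xs = 0\<^sub>v m\<close> by simp
        then show "xs i = 0" using i by simp
      qed
      with xs show False by auto
    qed
    show "Ht *\<^sub>v vec m xs = \<mu> \<cdot>\<^sub>v (Ft *\<^sub>v vec m xs)"
    proof (rule eq_vecI)
      fix i assume "i < dim_vec (\<mu> \<cdot>\<^sub>v (Ft *\<^sub>v vec m xs))"
      then have i: "i < m" using Ftc by simp
      have "(Ht *\<^sub>v vec m xs) $ i = (\<Sum>j<m. ht i j * xs j)"
        using i Htc unfolding ht_def by (simp add: scalar_prod_def row_def atLeast0LessThan)
      moreover have "(\<mu> \<cdot>\<^sub>v (Ft *\<^sub>v vec m xs)) $ i = \<mu> * (\<Sum>j<m. ft i j * xs j)"
        using i Ftc unfolding ft_def by (simp add: scalar_prod_def row_def atLeast0LessThan)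
      ultimately show "(Ht *\<^sub>v vec m xs) $ i = (\<mu> \<cdot>\<^sub>v (Ft *\<^sub>v vec m xs)) $ i" using eig i by simp
    qed (use Htc Ftc in simp)
  qed
  then have lam_mu: "lam0 \<le> \<mu>" using lam0_min by blast
  have minpart: "objective N l c U iota alpha \<in> \<real> \<and> lam0 \<le> Re (objective N l c U iota alpha)"
    if fa: "feasible N l S U iota alpha" for alpha
  proof -
    have ac: "alpha \<in> carrier_vec l" and f1: "val N l w one alpha = 1" and f2: "val N l w gS alpha = 0"
      using fa bF[of alpha] bG[of alpha] unfolding feasible_def by auto
    define y where "y = realvec l alpha"
    have yc: "y \<in> carrier_vec (2*l)" unfolding y_def by simp
    have ya: "alpha_of l y = alpha" unfolding y_def by (rule alpha_of_realvec[OF ac])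
    define z where "z = B *\<^sub>v y"
    have zc: "z \<in> carrier_vec (2*l)" unfolding z_def using B_car yc by simp
    have zy: "transpose_mat B *\<^sub>v z = y" unfolding z_def by (rule BtB[OF yc])
    have "(\<Sum>i<2*l. D $$ (i,i) * (z $ i)^2) = z \<bullet> (D *\<^sub>v z)" by (rule Dquad[OF zc, symmetric])
    also have "\<dots> = y \<bullet> (Gr *\<^sub>v y)" unfolding D_def using BTq[OF Grc zc] zy by simp
    also have "\<dots> = 0" using lG[OF yc] ya f2 by simp
    finally have "(\<Sum>i<2*l. D $$ (i,i) * (z $ i)^2) = 0" .
    then have "\<forall>i\<in>{..<2*l}. D $$ (i,i) * (z $ i)^2 = 0"
      by (subst (asm) sum_nonneg_eq_0_iff) (auto intro!: mult_nonneg_nonneg Dnn)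
    then have zz: "z $ i = 0" if "m \<le> i" "i < 2*l" for i
      using that B_nonzero unfolding D_def by auto
    define xv where "xv = vec m (\<lambda>i. z $ i)"
    have xvc: "xv \<in> carrier_vec m" unfolding xv_def by simp
    have zp: "padv (2*l) m xv = z"
      unfolding padv_def xv_def using zc zz mle by (intro eq_vecI) auto
    have "qform m ft (\<lambda>i. xv $ i) = val N l w one alpha"
      using Fquad[OF xvc] unfolding zp zy ya .
    then have qf1: "qform m ft (\<lambda>i. xv $ i) = 1" using f1 by simp
    have qh: "qform m ht (\<lambda>i. xv $ i) = val N l w c alpha"
      using Hquad[OF xvc] unfolding zp zy ya .
    have "\<mu> \<le> val N l w c alpha" using ineq[rule_format, of "\<lambda>i. xv $ i"] qf1 qh by simp
    then show ?thesis using lam_mu bH[of alpha] by simp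
  qed
  show ?thesis using feas0 obj0 minpart by blast
qed


end
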